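(* Let $k$ be an odd positive integer, let $A,B$ be finite subsets of an abelian group, and let $C\subseteq A+B$. Let $\Gamma_C$ be the bipartite graph with vertex classes $A$ and $B$ (taken as disjoint copies) in which $a\in A$ and $b\in B$ are adjacent if and only if $a+b\in C$. Suppose that for every pair $(a,b)\in A\times B$ there are at least $w>0$ walks of length $k$ in $\Gamma_C$ from $a$ to $b$. Then $|A+B|\le |C|^k/w$.
   Context: For subsets $X,Y$ of an abelian group, $X+Y=\{x+y:x\in X,y\in Y\}$. A walk of length $k$ is a sequence of $k+1$ vertices with consecutive vertices adjacent. *)

theory Defs
  imports Complex_Main "HOL-Library.Set_Algebras"
begin

text \<open>The bipartite graph Gamma_C: vertex classes are disjoint copies of A (tagged Inl)
  and B (tagged Inr); Inl a and Inr b are adjacent iff a \<in> A, b \<in> B and a + b \<in> C.\<close>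
definition bip_adj :: "'g::ab_group_add set \<Rightarrow> 'g set \<Rightarrow> 'g set \<Rightarrow> 'g + 'g \<Rightarrow> 'g + 'g \<Rightarrow> bool" where
  "bip_adj A B C u v =
     (case (u, v) of
        (Inl a, Inr b) \<Rightarrow> a \<in> A \<and> b \<in> B \<and> a + b \<in> C
      | (Inr b, Inl a) \<Rightarrow> a \<in> A \<and> b \<in> B \<and> a + b \<in> C
      | _ \<Rightarrow> False)"

definition walks :: "'g::ab_group_add set \<Rightarrow> 'g set \<Rightarrow> 'g set \<Rightarrow> nat \<Rightarrow> 'g + 'g \<Rightarrow> 'g + 'g \<Rightarrow> ('g + 'g) list set" where
  "walks A B C k u v =
     {xs. length xs = Suc k \<and> xs ! 0 = u \<and> xs ! k = v \<and>
          (\<forall>i<k. bip_adj A B C (xs ! i) (xs ! Suc i))}"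

end

theory Submission
  imports Defs
begin

fun vl :: "'g + 'g \<Rightarrow> 'g" where
  "vl (Inl a) = a" | "vl (Inr b) = b"

lemma alt_sum:
  fixes v :: "nat \<Rightarrow> 'g::ab_group_add"
  shows "(\<Sum>i<n. if even i then v i + v (Suc i) else - (v i + v (Suc i)))
         = v 0 + (if even n then - v n else v n)"
  by (induction n) (auto simp: algebra_simps)

lemma walk_adj_step:
  assumes "bip_adj A B C u p" "bip_adj A B C u q" "vl u + vl p = vl u + vl q"
  shows "p = q"
  using assms by (cases u; cases p; cases q) (auto simp: bip_adj_def)

theorem lemma2p1:
  fixes A B C :: "'g::ab_group_add set" and k :: nat and w :: real
  assumes "odd k"
    and "finite A" and "finite B"
    and "C \<subseteq> A + B"
    and "w > 0"
    and "\<forall>a\<in>A. \<forall>b\<in>B. real (card (walks A B C k (Inl a) (Inr b))) \<ge> w"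
  shows "real (card (A + B)) \<le> real (card C) ^ k / w"
proof -
  define S where "S = A + B"
  have finS: "finite S" unfolding S_def using assms(2,3) by (simp add: finite_set_plus)
  have finC: "finite C" using assms(4) finS S_def finite_subset by blast
  define pa where "pa x = (SOME p. fst p \<in> A \<and> snd p \<in> B \<and> x = fst p + snd p)" for x
  have pa: "fst (pa x) \<in> A \<and> snd (pa x) \<in> B \<and> x = fst (pa x) + snd (pa x)" if "x \<in> S" for x
  proof -
    from that obtain a b where "a \<in> A" "b \<in> B" "x = a + b" unfolding S_def
      by (auto elim: set_plus_elim)
    then have "\<exists>p. fst p \<in> A \<and> snd p \<in> B \<and> x = fst p + snd p" by (intro exI[of _ "(a,b)"]) auto
    then show ?thesis unfolding pa_def by (rule someI_ex)
  qed
  define W where "W x = walks A B C k (Inl (fst (pa x))) (Inr (snd (pa x)))" for x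
  have Wge: "real (card (W x)) \<ge> w" if "x \<in> S" for x
    using assms(6) pa[OF that] unfolding W_def by auto
  have finW: "finite (W x)" if "x \<in> S" for x
  proof (rule ccontr)
    assume "infinite (W x)"
    then have "card (W x) = 0" by simp
    with Wge[OF that] assms(5) show False by simp
  qed
  define T where "T = Sigma S W"
  define f where "f = (\<lambda>(x::'g, xs::('g+'g) list). map (\<lambda>i. vl (xs!i) + vl (xs ! Suc i)) [0..<k])"
  define alt where "alt cs = (\<Sum>i<k. if even i then cs ! i else - (cs ! i))" for cs :: "'g list"
  have altf: "alt (f (x, xs)) = x" if "(x, xs) \<in> T" for x xs
  proof -
    have x: "x \<in> S" and xs: "xs \<in> W x" using that unfolding T_def by auto
    have "alt (f (x, xs)) = (\<Sum>i<k. if even i then vl (xs!i) + vl (xs ! Suc i)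
                    else - (vl (xs!i) + vl (xs ! Suc i)))"
      unfolding alt_def f_def by (intro sum.cong) auto
    also have "\<dots> = vl (xs!0) + vl (xs!k)" using alt_sum[of "\<lambda>i. vl (xs!i)" k] assms(1) by simp
    also have "\<dots> = x" using xs pa[OF x] unfolding W_def walks_def by auto
    finally show ?thesis .
  qed
  have inj: "inj_on f T"
  proof (rule inj_onI)
    fix p q assume p: "p \<in> T" and q: "q \<in> T" and eq: "f p = f q"
    obtain x xs where px: "p = (x, xs)" by (cases p)
    obtain y ys where qy: "q = (y, ys)" by (cases q)
    have "x = y" using altf p q eq px qy by metis
    have x: "x \<in> S" and xs: "xs \<in> W x" using p px unfolding T_def by auto
    have ys: "ys \<in> W x" using q qy \<open>x = y\<close> unfolding T_def by auto
    have c: "vl (xs!i) + vl (xs ! Suc i) = vl (ys!i) + vl (ys ! Suc i)" if "i < k" for i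
    proof -
      have "f p ! i = f q ! i" using eq by simp
      then show ?thesis using that px qy unfolding f_def by simp
    qed
    have "\<forall>i. i \<le> k \<longrightarrow> xs ! i = ys ! i"
    proof (intro allI)
      fix i show "i \<le> k \<longrightarrow> xs ! i = ys ! i"
      proof (induction i)
        case 0 then show ?case using xs ys unfolding W_def walks_def by auto
      next
        case (Suc i)
        show ?case
        proof
          assume "Suc i \<le> k"
          then have ik: "i < k" by simp
          with Suc have e: "xs ! i = ys ! i" by simp
          have a1: "bip_adj A B C (xs!i) (xs ! Suc i)" using xs ik unfolding W_def walks_def by auto
          have a2: "bip_adj A B C (xs!i) (ys ! Suc i)" using ys ik e unfolding W_def walks_def by auto
          show "xs ! Suc i = ys ! Suc i"
            by (rule walk_adj_step[OF a1 a2]) (use c[OF ik] e in simp)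
        qed
      qed
    qed
    moreover have "length xs = Suc k" "length ys = Suc k" using xs ys unfolding W_def walks_def by auto
    ultimately have "xs = ys" by (intro nth_equalityI) auto
    then show "p = q" using px qy \<open>x = y\<close> by simp
  qed
  have img: "f ` T \<subseteq> {cs. set cs \<subseteq> C \<and> length cs = k}"
  proof
    fix cs assume "cs \<in> f ` T"
    then obtain x xs where t: "(x, xs) \<in> T" and cs: "cs = f (x, xs)" by auto
    have xs: "xs \<in> W x" using t unfolding T_def by auto
    have "vl (xs!i) + vl (xs ! Suc i) \<in> C" if "i < k" for i
    proof -
      have "bip_adj A B C (xs!i) (xs ! Suc i)" using xs that unfolding W_def walks_def by auto
      then show ?thesis by (cases "xs!i"; cases "xs ! Suc i") (auto simp: bip_adj_def add.commute)
    qed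
    then show "cs \<in> {cs. set cs \<subseteq> C \<and> length cs = k}" unfolding cs f_def by auto
  qed
  have "card T = card (f ` T)" using card_image[OF inj] by simp
  also have "\<dots> \<le> card {cs. set cs \<subseteq> C \<and> length cs = k}"
    by (rule card_mono[OF _ img]) (simp add: finite_lists_length_eq finC)
  also have "\<dots> = card C ^ k" by (simp add: card_lists_length_eq finC)
  finally have T1: "real (card T) \<le> real (card C) ^ k" by (metis of_nat_le_iff of_nat_power)
  have "card T = (\<Sum>x\<in>S. card (W x))" unfolding T_def using finS finW by (simp add: card_SigmaI)
  then have "real (card T) = (\<Sum>x\<in>S. real (card (W x)))" by simp
  also have "\<dots> \<ge> (\<Sum>x\<in>S. w)" by (rule sum_mono) (use Wge in auto)
  finally have "real (card S) * w \<le> real (card T)" by simp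
  then have "real (card S) * w \<le> real (card C) ^ k" using T1 by linarith
  then show ?thesis unfolding S_def using assms(5) by (simp add: field_simps)
qed

end
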